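(* Let $G$ be a group and $\mathcal{B}_1,\mathcal{B}_2:G\to G$ maps such that the operation $a\circ b=\mathcal{B}_1(a)b\mathcal{B}_2(a)$ is associative. Then for every $a\in G$, the element $e_a=\mathcal{B}_1(a)^{-1}a\mathcal{B}_2(a)^{-1}$ is a left identity of the semigroup $(G,\circ)$, i.e. $e_a\circ b=b$ for all $b\in G$. Moreover, if $(G,\mathcal{B}_1,\mathcal{B}_2)$ is a Rota-Baxter system of groups, then $\mathcal{B}_1(e_a)=\mathcal{B}_2(e_a)=1_G$ for all $a\in G$.
   Context: A Rota-Baxter system of groups is a triple $(G,\mathcal{B}_1,\mathcal{B}_2)$ where $G$ is a group with identity $1_G$ and $\mathcal{B}_1,\mathcal{B}_2:G\to G$ are maps such that for all $a,b\in G$: $\mathcal{B}_1(a)\mathcal{B}_1(b)=\mathcal{B}_1(\mathcal{B}_1(a)b\mathcal{B}_2(a))$ and $\mathcal{B}_2(b)\mathcal{B}_2(a)=\mathcal{B}_2(\mathcal{B}_1(a)b\mathcal{B}_2(a))$. *)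

theory Defs
  imports "HOL-Algebra.Group"
begin

definition rota_baxter_system :: "('a, 'b) monoid_scheme \<Rightarrow> ('a \<Rightarrow> 'a) \<Rightarrow> ('a \<Rightarrow> 'a) \<Rightarrow> bool" where
  "rota_baxter_system G B1 B2 \<longleftrightarrow> group G \<and>
     B1 \<in> carrier G \<rightarrow> carrier G \<and> B2 \<in> carrier G \<rightarrow> carrier G \<and>
     (\<forall>a\<in>carrier G. \<forall>b\<in>carrier G.
        B1 a \<otimes>\<^bsub>G\<^esub> B1 b = B1 (B1 a \<otimes>\<^bsub>G\<^esub> b \<otimes>\<^bsub>G\<^esub> B2 a) \<and>
        B2 b \<otimes>\<^bsub>G\<^esub> B2 a = B2 (B1 a \<otimes>\<^bsub>G\<^esub> b \<otimes>\<^bsub>G\<^esub> B2 a))"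

definition rb_circ :: "('a, 'b) monoid_scheme \<Rightarrow> ('a \<Rightarrow> 'a) \<Rightarrow> ('a \<Rightarrow> 'a) \<Rightarrow> 'a \<Rightarrow> 'a \<Rightarrow> 'a" where
  "rb_circ G B1 B2 a b = B1 a \<otimes>\<^bsub>G\<^esub> b \<otimes>\<^bsub>G\<^esub> B2 a"

end

theory Submission
  imports Defs
begin

theorem theorem3p6:
  fixes G :: "('a, 'b) monoid_scheme" and B1 B2 :: "'a \<Rightarrow> 'a"
  assumes grp: "group G"
    and B1: "B1 \<in> carrier G \<rightarrow> carrier G"
    and B2: "B2 \<in> carrier G \<rightarrow> carrier G"
    and assoc: "\<forall>a\<in>carrier G. \<forall>b\<in>carrier G. \<forall>c\<in>carrier G.
       rb_circ G B1 B2 (rb_circ G B1 B2 a b) c = rb_circ G B1 B2 a (rb_circ G B1 B2 b c)"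
  shows "(\<forall>a\<in>carrier G. \<forall>b\<in>carrier G.
            rb_circ G B1 B2 (inv\<^bsub>G\<^esub> (B1 a) \<otimes>\<^bsub>G\<^esub> a \<otimes>\<^bsub>G\<^esub> inv\<^bsub>G\<^esub> (B2 a)) b = b)
       \<and> (rota_baxter_system G B1 B2 \<longrightarrow>
            (\<forall>a\<in>carrier G.
               B1 (inv\<^bsub>G\<^esub> (B1 a) \<otimes>\<^bsub>G\<^esub> a \<otimes>\<^bsub>G\<^esub> inv\<^bsub>G\<^esub> (B2 a)) = \<one>\<^bsub>G\<^esub> \<and>
               B2 (inv\<^bsub>G\<^esub> (B1 a) \<otimes>\<^bsub>G\<^esub> a \<otimes>\<^bsub>G\<^esub> inv\<^bsub>G\<^esub> (B2 a)) = \<one>\<^bsub>G\<^esub>))"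
proof -
  interpret group G by (rule grp)
  have B1c: "\<And>x. x \<in> carrier G \<Longrightarrow> B1 x \<in> carrier G" using B1 by auto
  have B2c: "\<And>x. x \<in> carrier G \<Longrightarrow> B2 x \<in> carrier G" using B2 by auto
  have left: "\<forall>a\<in>carrier G. \<forall>b\<in>carrier G.
            rb_circ G B1 B2 (inv\<^bsub>G\<^esub> (B1 a) \<otimes>\<^bsub>G\<^esub> a \<otimes>\<^bsub>G\<^esub> inv\<^bsub>G\<^esub> (B2 a)) b = b"
  proof (intro ballI)
    fix a b assume a: "a \<in> carrier G" and b: "b \<in> carrier G"
    define e where "e = inv\<^bsub>G\<^esub> (B1 a) \<otimes>\<^bsub>G\<^esub> a \<otimes>\<^bsub>G\<^esub> inv\<^bsub>G\<^esub> (B2 a)"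
    have ec: "e \<in> carrier G" using a B1c B2c unfolding e_def by simp
    have ae: "rb_circ G B1 B2 a e = a"
      using a B1c[OF a] B2c[OF a] unfolding e_def rb_circ_def
      by (simp add: m_assoc flip: m_assoc[of "B1 a" "inv\<^bsub>G\<^esub> (B1 a)"])
    have ebc: "rb_circ G B1 B2 e b \<in> carrier G"
      using ec b B1c B2c unfolding rb_circ_def by simp
    have "rb_circ G B1 B2 a b = rb_circ G B1 B2 a (rb_circ G B1 B2 e b)"
      using assoc a ec b ae by metis
    hence "B1 a \<otimes>\<^bsub>G\<^esub> b \<otimes>\<^bsub>G\<^esub> B2 a = B1 a \<otimes>\<^bsub>G\<^esub> rb_circ G B1 B2 e b \<otimes>\<^bsub>G\<^esub> B2 a"
      unfolding rb_circ_def[of G B1 B2 a] .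
    hence "rb_circ G B1 B2 e b = b"
      using B1c[OF a] B2c[OF a] b ebc by (simp add: m_assoc)
    thus "rb_circ G B1 B2 (inv\<^bsub>G\<^esub> (B1 a) \<otimes>\<^bsub>G\<^esub> a \<otimes>\<^bsub>G\<^esub> inv\<^bsub>G\<^esub> (B2 a)) b = b" unfolding e_def .
  qed
  moreover have "rota_baxter_system G B1 B2 \<longrightarrow>
            (\<forall>a\<in>carrier G.
               B1 (inv\<^bsub>G\<^esub> (B1 a) \<otimes>\<^bsub>G\<^esub> a \<otimes>\<^bsub>G\<^esub> inv\<^bsub>G\<^esub> (B2 a)) = \<one>\<^bsub>G\<^esub> \<and>
               B2 (inv\<^bsub>G\<^esub> (B1 a) \<otimes>\<^bsub>G\<^esub> a \<otimes>\<^bsub>G\<^esub> inv\<^bsub>G\<^esub> (B2 a)) = \<one>\<^bsub>G\<^esub>)"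
  proof (intro impI ballI)
    assume rb: "rota_baxter_system G B1 B2"
    fix a assume a: "a \<in> carrier G"
    define e where "e = inv\<^bsub>G\<^esub> (B1 a) \<otimes>\<^bsub>G\<^esub> a \<otimes>\<^bsub>G\<^esub> inv\<^bsub>G\<^esub> (B2 a)"
    have ec: "e \<in> carrier G" using a B1c B2c unfolding e_def by simp
    have eb: "B1 e \<otimes>\<^bsub>G\<^esub> \<one>\<^bsub>G\<^esub> \<otimes>\<^bsub>G\<^esub> B2 e = \<one>\<^bsub>G\<^esub>"
      using left a one_closed unfolding e_def rb_circ_def by blast
    have r1: "B1 e \<otimes>\<^bsub>G\<^esub> B1 \<one>\<^bsub>G\<^esub> = B1 (B1 e \<otimes>\<^bsub>G\<^esub> \<one>\<^bsub>G\<^esub> \<otimes>\<^bsub>G\<^esub> B2 e)"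
     and r2: "B2 \<one>\<^bsub>G\<^esub> \<otimes>\<^bsub>G\<^esub> B2 e = B2 (B1 e \<otimes>\<^bsub>G\<^esub> \<one>\<^bsub>G\<^esub> \<otimes>\<^bsub>G\<^esub> B2 e)"
      using rb ec unfolding rota_baxter_system_def by auto
    have "B1 e \<otimes>\<^bsub>G\<^esub> B1 \<one>\<^bsub>G\<^esub> = B1 \<one>\<^bsub>G\<^esub>" using r1 eb by simp
    hence h1: "B1 e = \<one>\<^bsub>G\<^esub>" using B1c[OF ec] B1c[OF one_closed]
      by simp
    have "B2 \<one>\<^bsub>G\<^esub> \<otimes>\<^bsub>G\<^esub> B2 e = B2 \<one>\<^bsub>G\<^esub>" using r2 eb by simp
    hence h2: "B2 e = \<one>\<^bsub>G\<^esub>" using B2c[OF ec] B2c[OF one_closed]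
      by simp
    from h1 h2 show "B1 (inv\<^bsub>G\<^esub> (B1 a) \<otimes>\<^bsub>G\<^esub> a \<otimes>\<^bsub>G\<^esub> inv\<^bsub>G\<^esub> (B2 a)) = \<one>\<^bsub>G\<^esub> \<and>
               B2 (inv\<^bsub>G\<^esub> (B1 a) \<otimes>\<^bsub>G\<^esub> a \<otimes>\<^bsub>G\<^esub> inv\<^bsub>G\<^esub> (B2 a)) = \<one>\<^bsub>G\<^esub>" unfolding e_def by simp
  qed
  ultimately show ?thesis by simp
qed

end
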